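(* Let $\Gamma$ be a population network game, $\beta>0$, $\lambda\ge0$, and let $\sigma^2_{js}\ge0$ ($j\in V$, $s\in S_j$) be given. Consider the mean belief dynamics of an initially heterogeneous system, $$\frac{d\bar{\mu}_{is}}{dt}=\frac{f_{i,s}(\bar{\boldsymbol{\mu}})-\bar{\mu}_{is}}{\lambda+t+1}+\frac{\sum_{j\in V_i}\sum_{s'\in S_j}\frac{\partial^2 f_{i,s}}{\partial\mu_{js'}^2}(\bar{\boldsymbol{\mu}})\,\mathrm{Var}(\mu_{js'})(t)}{2(\lambda+t+1)},\qquad \mathrm{Var}(\mu_{js'})(t)=\Big(\tfrac{\lambda+1}{\lambda+t+1}\Big)^2\sigma^2_{js'},$$ for $i\in V$, $s\in S_i$. After the time reparametrization $\tau=\ln\frac{\lambda+t+1}{\lambda+1}$, this system is asymptotically autonomous with limit equation $$\frac{d\bar{\boldsymbol{\mu}}_i}{d\tau}=f_i(\{\bar{\boldsymbol{\mu}}_j\}_{j\in V_i})-\bar{\boldsymbol{\mu}}_i,\qquad i\in V,$$ i.e. its right-hand side $F(\tau,\bar{\boldsymbol{\mu}})$ converges, as $\tau\to\infty$, to $f(\bar{\boldsymbol{\mu}})-\bar{\boldsymbol{\mu}}$ uniformly on compact sets; and this limit equation is equivalent, via the same time reparametrization, to the belief dynamics of homogeneous systems $\frac{d\mu_{is}}{dt}=\frac{f_{i,s}(\{\boldsymbol{\mu}_j\}_{j\in V_i})-\mu_{is}}{\lambda+t+1}$.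
   Context: A population network game $\Gamma$ consists of a finite undirected graph with vertex set $V=\{1,\dots,n\}$ (populations) and edge set $E$; $V_i=\{j:\{i,j\}\in E\}$. Population $i$ has finite strategy set $S_i$, $\Delta_i\subset\mathbb{R}^{|S_i|}$ is the probability simplex, and each edge $\{i,j\}$ carries payoff matrices $\mathbf{A}_{ij}\in\mathbb{R}^{|S_i|\times|S_j|}$, $\mathbf{A}_{ji}\in\mathbb{R}^{|S_j|\times|S_i|}$. The logit choice function is $f_{i,s}(\{\boldsymbol{\mu}_j\}_{j\in V_i})=\exp\big(\beta\sum_{j\in V_i}\mathbf{e}_s^\top\mathbf{A}_{ij}\boldsymbol{\mu}_j\big)/\sum_{s'\in S_i}\exp\big(\beta\sum_{j\in V_i}\mathbf{e}_{s'}^\top\mathbf{A}_{ij}\boldsymbol{\mu}_j\big)$ ($\mathbf{e}_s$ the $s$-th unit vector), regarded as a smooth function of $(\boldsymbol{\mu}_j)_{j\in V_i}\in\prod_{j\in V_i}\mathbb{R}^{|S_j|}$; $f_{i,s}(\bar{\boldsymbol{\mu}})$ means $f_{i,s}(\{\bar{\boldsymbol{\mu}}_j\}_{j\in V_i})$. In a heterogeneous system, $\bar{\boldsymbol{\mu}}_j$ is the mean of the beliefs about population $j$ held across the system and $\sigma^2_{js}$ is the initial variance of the belief component $\mu_{js}$; the displayed variance formula is how this variance evolves. A nonautonomous system $x'=F(t,x)$ is asymptotically autonomous with limit equation $y'=g(y)$ if $F(t,x)\to g(x)$ as $t\to\infty$ uniformly on each compact set. *)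

theory Defs
  imports "HOL-Analysis.Analysis"
begin

text \<open>Populations are the elements of a finite type 'v, strategies are taken from a
finite type 's; population i uses the strategy set S i.  The graph is given by a
symmetric irreflexive relation E (V_i = {j. E i j}).  A i j s s' is the (s,s') entry of
the payoff matrix A_ij.  A state (mean belief profile) is a vector
mu :: real^('v * 's), whose coordinate (j,s) is mu_{js}; coordinates (j,s) with s not in
S j are irrelevant.\<close>

definition payoff :: "('v::finite \<Rightarrow> 's::finite set) \<Rightarrow> ('v \<Rightarrow> 'v \<Rightarrow> bool)
    \<Rightarrow> ('v \<Rightarrow> 'v \<Rightarrow> 's \<Rightarrow> 's \<Rightarrow> real) \<Rightarrow> 'v \<Rightarrow> 's \<Rightarrow> real^('v \<times> 's) \<Rightarrow> real" where
  "payoff S E A i s mu = (\<Sum>j\<in>{j. E i j}. \<Sum>s'\<in>S j. A i j s s' * mu $ (j, s'))"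

definition logit :: "('v::finite \<Rightarrow> 's::finite set) \<Rightarrow> ('v \<Rightarrow> 'v \<Rightarrow> bool)
    \<Rightarrow> ('v \<Rightarrow> 'v \<Rightarrow> 's \<Rightarrow> 's \<Rightarrow> real) \<Rightarrow> real \<Rightarrow> 'v \<Rightarrow> 's \<Rightarrow> real^('v \<times> 's) \<Rightarrow> real" where
  "logit S E A \<beta> i s mu =
     exp (\<beta> * payoff S E A i s mu) / (\<Sum>s''\<in>S i. exp (\<beta> * payoff S E A i s'' mu))"

definition upd :: "real^('k::finite) \<Rightarrow> 'k \<Rightarrow> real \<Rightarrow> real^'k" where
  "upd mu k x = (\<chi> k'. if k' = k then x else mu $ k')"

definition d2logit where
  "d2logit S E A \<beta> i s j s' mu =
     deriv (deriv (\<lambda>x. logit S E A \<beta> i s (upd mu (j, s') x))) (mu $ (j, s'))"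

definition het_rhs where
  "het_rhs S E A \<beta> lam \<sigma>2 i s t mu =
     (logit S E A \<beta> i s mu - mu $ (i, s)) / (lam + t + 1)
     + (\<Sum>j\<in>{j. E i j}. \<Sum>s'\<in>S j.
          d2logit S E A \<beta> i s j s' mu * (((lam + 1) / (lam + t + 1))^2 * \<sigma>2 j s'))
       / (2 * (lam + t + 1))"

text \<open>Inverse of the reparametrization tau = ln((lam+t+1)/(lam+1)).\<close>
definition tau_to_t :: "real \<Rightarrow> real \<Rightarrow> real" where
  "tau_to_t lam \<tau> = (lam + 1) * exp \<tau> - lam - 1"

text \<open>Right-hand side F(tau, mu) of the reparametrized heterogeneous system
  (dmu/dtau = dmu/dt * dt/dtau, with dt/dtau = lam + t + 1).\<close>
definition het_rhs_tau where
  "het_rhs_tau S E A \<beta> lam \<sigma>2 i s \<tau> mu =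
     (lam + tau_to_t lam \<tau> + 1) * het_rhs S E A \<beta> lam \<sigma>2 i s (tau_to_t lam \<tau>) mu"

definition lim_rhs where
  "lim_rhs S E A \<beta> i s mu = logit S E A \<beta> i s mu - mu $ (i, s)"

definition hom_rhs where
  "hom_rhs S E A \<beta> lam i s t mu = (logit S E A \<beta> i s mu - mu $ (i, s)) / (lam + t + 1)"

end

theory Submission imports Defs "HOL-Real_Asymp.Real_Asymp" begin


lemma tc_fwd:
  fixes g :: "real \<Rightarrow> real" and lam :: real
  assumes lam: "lam \<ge> 0"
    and H: "\<forall>t\<ge>0. (g has_real_derivative phi t) (at t within {0..})"
    and tau: "\<tau> \<ge> 0"
  shows "((\<lambda>\<tau>. g (tau_to_t lam \<tau>)) has_real_derivative (lam + tau_to_t lam \<tau> + 1) * phi (tau_to_t lam \<tau>)) (at \<tau> within {0..})"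
proof -
  let ?T = "tau_to_t lam"
  have Tpos: "?T u \<ge> 0" if "u \<ge> 0" for u
  proof -
    have "exp u \<ge> 1" using that by simp
    hence "(lam+1) * exp u \<ge> (lam+1)*1" using lam by (intro mult_left_mono) auto
    thus ?thesis by (simp add: tau_to_t_def)
  qed
  have dT: "(?T has_real_derivative (lam + ?T \<tau> + 1)) (at \<tau> within {0..})"
    unfolding tau_to_t_def by (auto intro!: derivative_eq_intros)
  have "(g has_real_derivative phi (?T \<tau>)) (at (?T \<tau>) within (?T ` {0..}))"
    using H Tpos tau by (auto intro: DERIV_subset)
  from DERIV_image_chain[OF this dT] show ?thesis by (simp add: o_def mult.commute)
qed

lemma tc_bwd:
  fixes g :: "real \<Rightarrow> real" and lam :: real
  assumes lam: "lam \<ge> 0"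
    and H: "\<forall>\<tau>\<ge>0. ((\<lambda>\<tau>. g (tau_to_t lam \<tau>)) has_real_derivative (lam + tau_to_t lam \<tau> + 1) * phi (tau_to_t lam \<tau>)) (at \<tau> within {0..})"
    and t: "t \<ge> 0"
  shows "(g has_real_derivative phi t) (at t within {0..})"
proof -
  let ?T = "tau_to_t lam"
  define h where "h = (\<lambda>t. ln ((lam + t + 1) / (lam + 1)))"
  have Th: "?T (h u) = u" if "u \<ge> 0" for u
    using that lam by (simp add: h_def tau_to_t_def)
  have hpos: "h u \<ge> 0" if "u \<ge> 0" for u
    using that lam by (simp add: h_def)
  have dh: "(h has_real_derivative 1 / (lam + t + 1)) (at t within {0..})"
  proof -
    have p: "lam + t + 1 > 0" "lam + 1 > 0" using t lam by auto
    show ?thesis unfolding h_def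
      by (rule derivative_eq_intros refl | use p in simp)+
  qed
  have "((\<lambda>\<tau>. g (?T \<tau>)) has_real_derivative (lam + ?T (h t) + 1) * phi (?T (h t))) (at (h t) within (h ` {0..}))"
    using H hpos t by (auto intro: DERIV_subset)
  note X = this
  have "((\<lambda>\<tau>. g (?T \<tau>)) \<circ> h has_real_derivative phi t) (at t within {0..})"
  proof -
    have p: "lam + t + 1 \<noteq> 0" using t lam by auto
    have "(lam + ?T (h t) + 1) * phi (?T (h t)) * (1 / (lam + t + 1)) = phi t"
      using Th[OF t] p by simp
    thus ?thesis using DERIV_image_chain[OF X dh] by metis
  qed
  thus ?thesis
    by (rule has_field_derivative_transform_within[where d=1]) (use t in \<open>auto simp: Th\<close>)
qed



lemma softmax_d2_bound:
  fixes R :: "'s set" and a d :: "'s \<Rightarrow> real"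
  assumes fin: "finite R" and sR: "s \<in> R" and Md: "\<forall>r\<in>R. \<bar>d r\<bar> \<le> M"
  shows "\<bar>deriv (deriv (\<lambda>x. exp (a s + d s * x) / (\<Sum>r\<in>R. exp (a r + d r * x)))) y\<bar> \<le> 6 * M^2"
proof -
  define e where "e = (\<lambda>r x. exp (a r + d r * x))"
  define Z where "Z = (\<lambda>x. \<Sum>r\<in>R. e r x)"
  define N1 where "N1 = (\<lambda>x. \<Sum>r\<in>R. d r * e r x)"
  define N2 where "N2 = (\<lambda>x. \<Sum>r\<in>R. d r * (d r * e r x))"
  define P1 where "P1 = (\<lambda>x. d s * e s x / Z x - e s x * N1 x / (Z x)^2)"
  define P2 where "P2 = (\<lambda>x. d s * P1 x - (d s * e s x * N1 x / (Z x)^2 + e s x * N2 x / (Z x)^2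
         - 2 * e s x * (N1 x)^2 / (Z x)^3))"
  have epos: "e r x > 0" for r x by (simp add: e_def)
  have Zpos: "Z x > 0" for x
    unfolding Z_def using fin sR epos by (intro sum_pos2[where i=s]) (auto intro: less_imp_le)
  have de: "(e r has_real_derivative d r * e r x) (at x)" for r x
    unfolding e_def by (auto intro!: derivative_eq_intros)
  have dZ: "(Z has_real_derivative N1 x) (at x)" for x
    unfolding Z_def N1_def using de by (intro DERIV_sum) auto
  have dN1: "(N1 has_real_derivative N2 x) (at x)" for x
    unfolding N1_def N2_def using de by (intro DERIV_sum DERIV_cmult) auto
  have dP: "((\<lambda>x. e s x / Z x) has_real_derivative P1 x) (at x)" for x
  proof -
    have "((\<lambda>x. e s x / Z x) has_real_derivative (d s * e s x * Z x - e s x * N1 x) / (Z x * Z x)) (at x)"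
      using DERIV_divide[OF de dZ] Zpos[of x] by simp
    moreover have "(d s * e s x * Z x - e s x * N1 x) / (Z x * Z x) = P1 x"
      using Zpos[of x] unfolding P1_def by (simp add: field_simps power2_eq_square)
    ultimately show ?thesis by simp
  qed
  have dP1: "(P1 has_real_derivative P2 x) (at x)" for x
  proof -
    have A: "((\<lambda>x. d s * e s x / Z x) has_real_derivative d s * P1 x) (at x)"
      using DERIV_cmult[OF dP, of "d s"] by simp
    have B: "((\<lambda>x. e s x * N1 x) has_real_derivative d s * e s x * N1 x + e s x * N2 x) (at x)"
      using DERIV_mult[OF de dN1] by (simp add: algebra_simps)
    have C: "((\<lambda>x. (Z x)^2) has_real_derivative 2 * Z x * N1 x) (at x)"
      by (rule derivative_eq_intros dZ refl | simp)+
    have D: "((\<lambda>x. e s x * N1 x / (Z x)^2) has_real_derivative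
        ((d s * e s x * N1 x + e s x * N2 x) * (Z x)^2 - e s x * N1 x * (2 * Z x * N1 x)) / ((Z x)^2 * (Z x)^2)) (at x)"
      using DERIV_divide[OF B C] Zpos[of x] by (simp add: power2_eq_square)
    have "(P1 has_real_derivative
        d s * P1 x
        - ((d s * e s x * N1 x + e s x * N2 x) * (Z x)^2 - e s x * N1 x * (2 * Z x * N1 x)) / ((Z x)^2 * (Z x)^2)) (at x)"
    proof -
      have P1eq: "P1 = (\<lambda>x. d s * e s x / Z x - e s x * N1 x / (Z x)^2)" by (simp add: P1_def)
      from DERIV_diff[OF A D] show ?thesis unfolding P1eq[symmetric] .
    qed
    moreover have "d s * P1 x
        - ((d s * e s x * N1 x + e s x * N2 x) * (Z x)^2 - e s x * N1 x * (2 * Z x * N1 x)) / ((Z x)^2 * (Z x)^2) = P2 x"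
      using Zpos[of x] unfolding P2_def P1_def by (simp add: field_simps power2_eq_square power3_eq_cube)
    ultimately show ?thesis by simp
  qed
  have "deriv (\<lambda>x. e s x / Z x) = P1" using dP by (intro ext DERIV_imp_deriv)
  moreover have "deriv P1 y = P2 y" using dP1 by (intro DERIV_imp_deriv)
  ultimately have eq: "deriv (deriv (\<lambda>x. exp (a s + d s * x) / (\<Sum>r\<in>R. exp (a r + d r * x)))) y = P2 y"
    unfolding e_def Z_def by simp
  define q where "q = e s y / Z y"
  define m1 where "m1 = N1 y / Z y"
  define m2 where "m2 = N2 y / Z y"
  have M0: "M \<ge> 0" using Md sR by force
  have Zy: "Z y > 0" by (rule Zpos)
  have esZ: "e s y \<le> Z y" unfolding Z_def
    by (rule member_le_sum) (use sR fin epos in \<open>auto intro: less_imp_le\<close>)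
  have q: "0 \<le> q" "q \<le> 1" unfolding q_def using esZ Zy epos[of s y] by auto
  have "\<bar>N1 y\<bar> \<le> (\<Sum>r\<in>R. \<bar>d r * e r y\<bar>)" unfolding N1_def by (rule sum_abs)
  also have "\<dots> \<le> (\<Sum>r\<in>R. M * e r y)"
  proof (intro sum_mono)
    fix r assume r: "r \<in> R"
    have "\<bar>e r y\<bar> = e r y" using epos[of r y] by simp
    thus "\<bar>d r * e r y\<bar> \<le> M * e r y" using Md r epos[of r y]
      by (simp add: abs_mult mult_right_mono)
  qed
  also have "\<dots> = M * Z y" by (simp add: Z_def sum_distrib_left)
  finally have "\<bar>N1 y\<bar> \<le> M * Z y" .
  moreover have "\<bar>m1\<bar> = \<bar>N1 y\<bar> / Z y" unfolding m1_def abs_divide using Zy by simp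
  ultimately have m1: "\<bar>m1\<bar> \<le> M" using Zy by (simp add: pos_divide_le_eq)
  have "N2 y \<le> (\<Sum>r\<in>R. M^2 * e r y)" unfolding N2_def
  proof (intro sum_mono)
    fix r assume "r \<in> R"
    hence drM: "\<bar>d r\<bar> \<le> M" using Md by simp
    have "(d r)^2 \<le> M^2" using power_mono[OF drM abs_ge_zero, of 2] by simp
    thus "d r * (d r * e r y) \<le> M^2 * e r y" using epos[of r y]
      by (simp add: power2_eq_square mult.assoc[symmetric] mult_right_mono)
  qed
  also have "\<dots> = M^2 * Z y" by (simp add: Z_def sum_distrib_left)
  finally have "N2 y \<le> M^2 * Z y" .
  moreover have "N2 y \<ge> 0" unfolding N2_def using epos
    by (intro sum_nonneg) (metis less_imp_le mult_nonneg_nonneg zero_le_square mult.assoc)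
  ultimately have m2: "0 \<le> m2" "m2 \<le> M^2" unfolding m2_def using Zy by (auto simp: pos_divide_le_eq)
  have ds: "\<bar>d s\<bar> \<le> M" using Md sR by auto
  have P1q: "P1 y = q * (d s - m1)" unfolding P1_def q_def m1_def using Zy
    by (simp add: field_simps power2_eq_square)
  have P2q: "P2 y = d s * P1 y - (d s * q * m1 + q * m2 - 2 * q * m1^2)"
    unfolding P2_def q_def m1_def m2_def using Zy by (simp add: field_simps power2_eq_square power3_eq_cube)
  have b1: "\<bar>P1 y\<bar> \<le> 2 * M" unfolding P1q abs_mult
  proof -
    have "\<bar>d s - m1\<bar> \<le> 2 * M" using ds m1 by linarith
    hence "\<bar>q\<bar> * \<bar>d s - m1\<bar> \<le> 1 * (2 * M)" using q M0
      by (intro mult_mono) auto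
    thus "\<bar>q\<bar> * \<bar>d s - m1\<bar> \<le> 2 * M" by simp
  qed
  have t1: "\<bar>d s * P1 y\<bar> \<le> M * (2 * M)" unfolding abs_mult using ds b1 M0
    by (intro mult_mono) auto
  have t2: "\<bar>d s * q * m1\<bar> \<le> M * 1 * M" unfolding abs_mult using ds q m1 M0
    by (intro mult_mono) auto
  have t3: "\<bar>q * m2\<bar> \<le> 1 * M^2" unfolding abs_mult using q m2 M0
    by (intro mult_mono) auto
  have m1sq: "\<bar>m1^2\<bar> \<le> M^2" using power_mono[OF m1 abs_ge_zero, of 2] by simp
  have t4: "\<bar>2 * q * m1^2\<bar> \<le> 2 * 1 * M^2" unfolding abs_mult[of "2*q"] abs_mult[of 2] using q m1sq M0
    by (intro mult_mono) auto
  have "\<bar>P2 y\<bar> \<le> 6 * M^2" unfolding P2q using t1 t2 t3 t4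
    by (simp add: power2_eq_square)
  thus ?thesis using eq by simp
qed


lemma payoff_upd:
  fixes S :: "'v::finite \<Rightarrow> 's::finite set"
  shows "payoff S E A i r (upd mu (j, s') x) =
    payoff S E A i r (upd mu (j, s') 0) + (if E i j \<and> s' \<in> S j then A i j r s' else 0) * x"
proof -
  have "payoff S E A i r (upd mu (j, s') x) =
      (\<Sum>j'\<in>{j. E i j}. \<Sum>s''\<in>S j'. A i j' r s'' * (upd mu (j, s') 0) $ (j', s'')
        + (if j' = j \<and> s'' = s' then A i j r s' * x else 0))"
    unfolding payoff_def upd_def by (intro sum.cong refl) auto
  also have "\<dots> = payoff S E A i r (upd mu (j, s') 0) +
      (\<Sum>j'\<in>{j. E i j}. \<Sum>s''\<in>S j'. (if j' = j \<and> s'' = s' then A i j r s' * x else 0))"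
    unfolding payoff_def by (simp add: sum.distrib)
  also have "(\<Sum>j'\<in>{j. E i j}. \<Sum>s''\<in>S j'. (if j' = j \<and> s'' = s' then A i j r s' * x else 0))
      = (if E i j \<and> s' \<in> S j then A i j r s' else 0) * x"
  proof -
    have "(\<Sum>j'\<in>{j. E i j}. \<Sum>s''\<in>S j'. (if j' = j \<and> s'' = s' then A i j r s' * x else 0))
       = (\<Sum>j'\<in>{j. E i j}. if j' = j then (if s' \<in> S j then A i j r s' * x else 0) else 0)"
      by (intro sum.cong refl) (auto simp: sum.delta')
    also have "\<dots> = (if E i j \<and> s' \<in> S j then A i j r s' else 0) * x"
      by (cases "s' \<in> S j") (auto simp: sum.delta)
    finally show ?thesis .
  qed
  finally show ?thesis .
qed

lemma d2logit_bound:
  fixes S :: "'v::finite \<Rightarrow> 's::finite set"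
  assumes "s \<in> S i" "\<beta> > 0"
  shows "\<bar>d2logit S E A \<beta> i s j s' mu\<bar> \<le> 6 * (\<beta> * (\<Sum>r\<in>UNIV. \<bar>A i j r s'\<bar>))^2"
proof -
  define a where "a = (\<lambda>r. \<beta> * payoff S E A i r (upd mu (j, s') 0))"
  define d where "d = (\<lambda>r. \<beta> * (if E i j \<and> s' \<in> S j then A i j r s' else 0))"
  have eqf: "(\<lambda>x. logit S E A \<beta> i s (upd mu (j, s') x)) =
      (\<lambda>x. exp (a s + d s * x) / (\<Sum>r\<in>S i. exp (a r + d r * x)))"
  proof -
    have pe: "\<beta> * payoff S E A i r (upd mu (j, s') x) = a r + d r * x" for r x
      by (subst payoff_upd) (simp add: a_def d_def algebra_simps)
    show ?thesis unfolding logit_def pe ..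
  qed
  have Md: "\<forall>r\<in>S i. \<bar>d r\<bar> \<le> \<beta> * (\<Sum>r\<in>UNIV. \<bar>A i j r s'\<bar>)"
  proof
    fix r
    have "\<bar>A i j r s'\<bar> \<le> (\<Sum>r\<in>UNIV. \<bar>A i j r s'\<bar>)"
      by (rule member_le_sum) auto
    moreover have "\<bar>(if E i j \<and> s' \<in> S j then A i j r s' else 0)\<bar> \<le> \<bar>A i j r s'\<bar>" by auto
    ultimately have "\<bar>(if E i j \<and> s' \<in> S j then A i j r s' else 0)\<bar> \<le> (\<Sum>r\<in>UNIV. \<bar>A i j r s'\<bar>)"
      by linarith
    hence "\<beta> * \<bar>(if E i j \<and> s' \<in> S j then A i j r s' else 0)\<bar> \<le> \<beta> * (\<Sum>r\<in>UNIV. \<bar>A i j r s'\<bar>)"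
      using assms(2) by (intro mult_left_mono) auto
    thus "\<bar>d r\<bar> \<le> \<beta> * (\<Sum>r\<in>UNIV. \<bar>A i j r s'\<bar>)" using assms(2)
      unfolding d_def by (simp add: abs_mult)
  qed
  show ?thesis unfolding d2logit_def eqf
    by (rule softmax_d2_bound[OF finite assms(1) Md])
qed



lemma L_eq: "lam + tau_to_t lam \<tau> + 1 = (lam + 1) * exp \<tau>"
  by (simp add: tau_to_t_def)

lemma tc_iff:
  fixes g :: "real \<Rightarrow> real" and lam :: real
  assumes lam: "lam \<ge> 0"
  shows "(\<forall>t\<ge>0. (g has_real_derivative phi t) (at t within {0..})) \<longleftrightarrow>
    (\<forall>\<tau>\<ge>0. ((\<lambda>\<tau>. g (tau_to_t lam \<tau>)) has_real_derivative (lam + tau_to_t lam \<tau> + 1) * phi (tau_to_t lam \<tau>)) (at \<tau> within {0..}))"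
  using tc_fwd[OF lam] tc_bwd[OF lam] by blast

lemma unif_from_bound:
  fixes F :: "real \<Rightarrow> 'a \<Rightarrow> real" and G :: "'a \<Rightarrow> real"
  assumes bound: "\<And>\<tau> mu. \<bar>F \<tau> mu - G mu\<bar> \<le> C * exp (-(2*\<tau>)) / 2"
  shows "uniform_limit K F G at_top"
  unfolding uniform_limit_iff
proof (intro allI impI)
  fix e :: real assume e: "e > 0"
  have lim0: "((\<lambda>\<tau>. C * exp (-(2*\<tau>)) / 2) \<longlongrightarrow> 0) at_top" by real_asymp
  have ev: "\<forall>\<^sub>F \<tau> in at_top. C * exp (-(2*\<tau>)) / 2 < e" using order_tendstoD(2)[OF lim0 e] .
  have bnd2: "dist (F \<tau> mu) (G mu) < e" if "C * exp (-(2*\<tau>)) / 2 < e" for \<tau> mu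
    unfolding dist_real_def by (rule le_less_trans[OF bound that])
  show "\<forall>\<^sub>F \<tau> in at_top. \<forall>mu\<in>K. dist (F \<tau> mu) (G mu) < e"
    using ev by (rule eventually_mono) (intro ballI bnd2)
qed

lemma swap_iff:
  assumes "\<And>i s. (\<forall>t\<ge>(0::real). P i s t) \<longleftrightarrow> (\<forall>\<tau>\<ge>(0::real). Q i s \<tau>)"
  shows "(\<forall>t\<ge>0. \<forall>i. \<forall>s\<in>S i. P i s t) \<longleftrightarrow> (\<forall>\<tau>\<ge>0. \<forall>i. \<forall>s\<in>S i. Q i s \<tau>)"
  using assms by blast

theorem lemma1:
  fixes S :: "'v::finite \<Rightarrow> 's::finite set"
    and E :: "'v \<Rightarrow> 'v \<Rightarrow> bool"
    and A :: "'v \<Rightarrow> 'v \<Rightarrow> 's \<Rightarrow> 's \<Rightarrow> real"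
    and \<beta> lam :: real
    and \<sigma>2 :: "'v \<Rightarrow> 's \<Rightarrow> real"
  assumes sym: "\<forall>i j. E i j \<longrightarrow> E j i"
    and irrefl: "\<forall>i. \<not> E i i"
    and nonempty: "\<forall>i. S i \<noteq> {}"
    and beta: "\<beta> > 0"
    and lam: "lam \<ge> 0"
    and var: "\<forall>j. \<forall>s\<in>S j. \<sigma>2 j s \<ge> 0"
  shows
    "(\<forall>x :: real \<Rightarrow> real^('v \<times> 's).
        (\<forall>t\<ge>0. \<forall>i. \<forall>s\<in>S i.
           ((\<lambda>t. x t $ (i, s)) has_real_derivative het_rhs S E A \<beta> lam \<sigma>2 i s t (x t))
             (at t within {0..}))
        \<longleftrightarrow>
        (\<forall>\<tau>\<ge>0. \<forall>i. \<forall>s\<in>S i.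
           ((\<lambda>\<tau>. x (tau_to_t lam \<tau>) $ (i, s)) has_real_derivative
              het_rhs_tau S E A \<beta> lam \<sigma>2 i s \<tau> (x (tau_to_t lam \<tau>)))
             (at \<tau> within {0..})))
     \<and> (\<forall>K :: (real^('v \<times> 's)) set. compact K \<longrightarrow>
          (\<forall>i. \<forall>s\<in>S i.
             uniform_limit K (\<lambda>\<tau> mu. het_rhs_tau S E A \<beta> lam \<sigma>2 i s \<tau> mu)
               (lim_rhs S E A \<beta> i s) at_top))
     \<and> (\<forall>x :: real \<Rightarrow> real^('v \<times> 's).
        (\<forall>t\<ge>0. \<forall>i. \<forall>s\<in>S i.
           ((\<lambda>t. x t $ (i, s)) has_real_derivative hom_rhs S E A \<beta> lam i s t (x t))
             (at t within {0..}))
        \<longleftrightarrow>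
        (\<forall>\<tau>\<ge>0. \<forall>i. \<forall>s\<in>S i.
           ((\<lambda>\<tau>. x (tau_to_t lam \<tau>) $ (i, s)) has_real_derivative
              lim_rhs S E A \<beta> i s (x (tau_to_t lam \<tau>)))
             (at \<tau> within {0..})))"
proof (intro conjI allI impI)
  fix x :: "real \<Rightarrow> real^('v \<times> 's)"
  have *: "(\<forall>t\<ge>0. ((\<lambda>t. x t $ (i, s)) has_real_derivative het_rhs S E A \<beta> lam \<sigma>2 i s t (x t))
             (at t within {0..})) \<longleftrightarrow> (\<forall>\<tau>\<ge>0. ((\<lambda>\<tau>. x (tau_to_t lam \<tau>) $ (i, s)) has_real_derivative
              het_rhs_tau S E A \<beta> lam \<sigma>2 i s \<tau> (x (tau_to_t lam \<tau>)))
             (at \<tau> within {0..}))" for i s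
    using tc_iff[OF lam, of "\<lambda>t. x t $ (i, s)" "\<lambda>t. het_rhs S E A \<beta> lam \<sigma>2 i s t (x t)"]
    by (simp only: het_rhs_tau_def)
  show "(\<forall>t\<ge>0. \<forall>i. \<forall>s\<in>S i.
           ((\<lambda>t. x t $ (i, s)) has_real_derivative het_rhs S E A \<beta> lam \<sigma>2 i s t (x t))
             (at t within {0..}))
        \<longleftrightarrow>
        (\<forall>\<tau>\<ge>0. \<forall>i. \<forall>s\<in>S i.
           ((\<lambda>\<tau>. x (tau_to_t lam \<tau>) $ (i, s)) has_real_derivative
              het_rhs_tau S E A \<beta> lam \<sigma>2 i s \<tau> (x (tau_to_t lam \<tau>)))
             (at \<tau> within {0..}))"
    by (rule swap_iff[where P="\<lambda>i s t. ((\<lambda>t. x t $ (i, s)) has_real_derivative het_rhs S E A \<beta> lam \<sigma>2 i s t (x t)) (at t within {0..})"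
        and Q="\<lambda>i s \<tau>. ((\<lambda>\<tau>. x (tau_to_t lam \<tau>) $ (i, s)) has_real_derivative het_rhs_tau S E A \<beta> lam \<sigma>2 i s \<tau> (x (tau_to_t lam \<tau>))) (at \<tau> within {0..})"])
       (rule *)
next
  fix x :: "real \<Rightarrow> real^('v \<times> 's)"
  have eq: "lim_rhs S E A \<beta> i s mu = (lam + tau_to_t lam \<tau> + 1) * hom_rhs S E A \<beta> lam i s (tau_to_t lam \<tau>) mu"
    for i s mu \<tau>
  proof -
    have "lam + tau_to_t lam \<tau> + 1 > 0" unfolding L_eq using lam by simp
    thus ?thesis unfolding lim_rhs_def hom_rhs_def by simp
  qed
  have *: "(\<forall>t\<ge>0. ((\<lambda>t. x t $ (i, s)) has_real_derivative hom_rhs S E A \<beta> lam i s t (x t))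
             (at t within {0..})) \<longleftrightarrow> (\<forall>\<tau>\<ge>0. ((\<lambda>\<tau>. x (tau_to_t lam \<tau>) $ (i, s)) has_real_derivative
              lim_rhs S E A \<beta> i s (x (tau_to_t lam \<tau>)))
             (at \<tau> within {0..}))" for i s
    using tc_iff[OF lam, of "\<lambda>t. x t $ (i, s)" "\<lambda>t. hom_rhs S E A \<beta> lam i s t (x t)"]
    by (simp only: eq[symmetric])
  show "(\<forall>t\<ge>0. \<forall>i. \<forall>s\<in>S i.
           ((\<lambda>t. x t $ (i, s)) has_real_derivative hom_rhs S E A \<beta> lam i s t (x t))
             (at t within {0..}))
        \<longleftrightarrow>
        (\<forall>\<tau>\<ge>0. \<forall>i. \<forall>s\<in>S i.
           ((\<lambda>\<tau>. x (tau_to_t lam \<tau>) $ (i, s)) has_real_derivative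
              lim_rhs S E A \<beta> i s (x (tau_to_t lam \<tau>)))
             (at \<tau> within {0..}))"
    by (rule swap_iff[where P="\<lambda>i s t. ((\<lambda>t. x t $ (i, s)) has_real_derivative hom_rhs S E A \<beta> lam i s t (x t)) (at t within {0..})"
        and Q="\<lambda>i s \<tau>. ((\<lambda>\<tau>. x (tau_to_t lam \<tau>) $ (i, s)) has_real_derivative lim_rhs S E A \<beta> i s (x (tau_to_t lam \<tau>))) (at \<tau> within {0..})"])
       (rule *)
next
  fix K :: "(real^('v \<times> 's)) set" and i
  show "\<forall>s\<in>S i. uniform_limit K (\<lambda>\<tau> mu. het_rhs_tau S E A \<beta> lam \<sigma>2 i s \<tau> mu)
               (lim_rhs S E A \<beta> i s) at_top"
  proof
    fix s assume s: "s \<in> S i"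
    define B where "B = (\<lambda>j s'. 6 * (\<beta> * (\<Sum>r\<in>UNIV. \<bar>A i j r s'\<bar>))^2)"
    define C where "C = (\<Sum>j\<in>{j. E i j}. \<Sum>s'\<in>S j. B j s' * \<bar>\<sigma>2 j s'\<bar>)"
    have bound: "\<bar>het_rhs_tau S E A \<beta> lam \<sigma>2 i s \<tau> mu - lim_rhs S E A \<beta> i s mu\<bar> \<le> C * exp (-(2*\<tau>)) / 2"
      for \<tau> mu
    proof -
      define L where "L = lam + tau_to_t lam \<tau> + 1"
      have Lpos: "L > 0" unfolding L_def L_eq using lam by simp
      define w where "w = ((lam + 1) / L)^2"
      have w: "w = exp (-(2*\<tau>))"
      proof -
        have "(lam + 1) / L = exp (-\<tau>)" unfolding L_def L_eq using lam
          by (simp add: exp_minus divide_simps)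
        thus ?thesis unfolding w_def by (simp add: power2_eq_square flip: exp_add)
      qed
      have w0: "w \<ge> 0" unfolding w_def by simp
      define SS where "SS = (\<Sum>j\<in>{j. E i j}. \<Sum>s'\<in>S j. d2logit S E A \<beta> i s j s' mu * (w * \<sigma>2 j s'))"
      have alg: "L * (a / L + b / (2 * L)) - a = b / 2" for a b :: real
        using Lpos by (simp add: field_simps)
      have E1: "het_rhs_tau S E A \<beta> lam \<sigma>2 i s \<tau> mu - lim_rhs S E A \<beta> i s mu = SS / 2"
        unfolding het_rhs_tau_def het_rhs_def lim_rhs_def SS_def w_def L_def[symmetric]
        by (rule alg)
      have E2: "\<bar>SS\<bar> \<le> C * w"
      proof -
        have "\<bar>SS\<bar> \<le> (\<Sum>j\<in>{j. E i j}. \<bar>\<Sum>s'\<in>S j. d2logit S E A \<beta> i s j s' mu * (w * \<sigma>2 j s')\<bar>)"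
          unfolding SS_def by (rule sum_abs)
        also have "\<dots> \<le> (\<Sum>j\<in>{j. E i j}. \<Sum>s'\<in>S j. B j s' * \<bar>\<sigma>2 j s'\<bar> * w)"
        proof (intro sum_mono order_trans[OF sum_abs])
          fix j s'
          have "\<bar>d2logit S E A \<beta> i s j s' mu\<bar> \<le> B j s'"
            unfolding B_def by (rule d2logit_bound[of s S i, OF s beta])
          hence "\<bar>d2logit S E A \<beta> i s j s' mu\<bar> * (w * \<bar>\<sigma>2 j s'\<bar>) \<le> B j s' * (w * \<bar>\<sigma>2 j s'\<bar>)"
            using w0 by (intro mult_right_mono) auto
          thus "\<bar>d2logit S E A \<beta> i s j s' mu * (w * \<sigma>2 j s')\<bar> \<le> B j s' * \<bar>\<sigma>2 j s'\<bar> * w"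
            using w0 by (simp add: abs_mult mult_ac)
        qed
        also have "\<dots> = C * w" unfolding C_def by (simp add: sum_distrib_right)
        finally show ?thesis .
      qed
      have "\<bar>het_rhs_tau S E A \<beta> lam \<sigma>2 i s \<tau> mu - lim_rhs S E A \<beta> i s mu\<bar> = \<bar>SS\<bar> / 2"
        unfolding E1 by simp
      thus ?thesis using E2 unfolding w by linarith
    qed
    show "uniform_limit K (\<lambda>\<tau> mu. het_rhs_tau S E A \<beta> lam \<sigma>2 i s \<tau> mu) (lim_rhs S E A \<beta> i s) at_top"
      by (rule unif_from_bound[OF bound])
  qed
qed


end
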